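(* Let $A_1,A_2\in\mathbb{S}^n$ be such that there is no permutation matrix $\Pi\in\mathrm{Sym}(n)$ with $A_1=\Pi A_2\Pi^T$. Then there exists $P\in\mathbb{S}^n$ such that $\Theta_P(A_1)\neq\Theta_P(A_2)$.
   Context: $\mathbb{S}^n$ denotes the space of real symmetric $n\times n$ matrices (adjacency matrices of weighted graphs on $n$ nodes, with diagonal entries as node weights). $\mathrm{Sym}(n)$ denotes the group of $n\times n$ permutation matrices. For $P\in\mathbb{S}^n$, $\Theta_P(A)=\max_{\Pi\in\mathrm{Sym}(n)}\mathrm{tr}(P\Pi A\Pi^T)$. *)

theory Defs
  imports "HOL-Analysis.Analysis"
begin

definition symmetric_matrix :: "real^'n^'n \<Rightarrow> bool" where
  "symmetric_matrix A \<longleftrightarrow> transpose A = A"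

definition perm_matrix :: "('n::finite \<Rightarrow> 'n) \<Rightarrow> real^'n^'n" where
  "perm_matrix p = (\<chi> i j. if p i = j then 1 else 0)"

definition perm_matrices :: "(real^'n^'n) set" where
  "perm_matrices = {perm_matrix p | p. p permutes (UNIV :: 'n::finite set)}"

definition Theta :: "real^'n^'n \<Rightarrow> real^'n^'n \<Rightarrow> real" where
  "Theta P A = Max ((\<lambda>Q. trace (P ** Q ** A ** transpose Q)) ` perm_matrices)"

end

theory Submission
  imports Defs
begin

lemma pm_left: "(perm_matrix p ** A) $ i $ k = A $ (p i) $ k"
proof -
  have "(perm_matrix p ** A) $ i $ k = (\<Sum>j\<in>UNIV. (if p i = j then 1 else 0) * A $ j $ k)"
    by (simp add: matrix_matrix_mult_def perm_matrix_def)
  also have "\<dots> = (\<Sum>j\<in>UNIV. if p i = j then A $ j $ k else 0)"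
    by (rule sum.cong) auto
  also have "\<dots> = A $ (p i) $ k" by simp
  finally show ?thesis .
qed

lemma pm_conj: "(perm_matrix p ** A ** transpose (perm_matrix p)) $ i $ j = A $ (p i) $ (p j)"
proof -
  have "(perm_matrix p ** A ** transpose (perm_matrix p)) $ i $ j
     = (\<Sum>k\<in>UNIV. (perm_matrix p ** A) $ i $ k * (if p j = k then 1 else 0))"
    by (simp add: matrix_matrix_mult_def perm_matrix_def transpose_def)
  also have "\<dots> = (\<Sum>k\<in>UNIV. if p j = k then (perm_matrix p ** A) $ i $ k else 0)"
    by (rule sum.cong) auto
  also have "\<dots> = (perm_matrix p ** A) $ i $ (p j)" by simp
  finally show ?thesis by (simp add: pm_left)
qed

lemma inner_mat: "(X::real^'n^'n) \<bullet> Y = (\<Sum>i\<in>UNIV. \<Sum>j\<in>UNIV. X$i$j * Y$i$j)"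
  by (simp add: inner_vec_def)

lemma trace_sym: assumes "symmetric_matrix P"
  shows "trace (P ** M) = P \<bullet> (M::real^'n^'n)"
proof -
  have "trace (P ** M) = (\<Sum>i\<in>UNIV. \<Sum>k\<in>UNIV. P$i$k * M$k$i)"
    by (simp add: trace_def matrix_matrix_mult_def)
  also have "\<dots> = (\<Sum>k\<in>UNIV. \<Sum>i\<in>UNIV. P$i$k * M$k$i)" by (rule sum.swap)
  also have "\<dots> = (\<Sum>k\<in>UNIV. \<Sum>i\<in>UNIV. P$k$i * M$k$i)"
  proof -
    have "P$i$k = P$k$i" for i k
    proof -
      have "(transpose P)$i$k = P$k$i" by (simp add: transpose_def)
      thus ?thesis using assms unfolding symmetric_matrix_def by metis
    qed
    thus ?thesis by (intro sum.cong refl) metis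
  qed
  finally show ?thesis unfolding inner_mat .
qed

lemma conj_norm: assumes "p permutes (UNIV::'n::finite set)"
  shows "(perm_matrix p ** A ** transpose (perm_matrix p)) \<bullet> (perm_matrix p ** A ** transpose (perm_matrix p)) = A \<bullet> (A::real^'n^'n)"
proof -
  have b: "bij_betw p UNIV UNIV" using assms by (rule permutes_imp_bij)
  have "(perm_matrix p ** A ** transpose (perm_matrix p)) \<bullet> (perm_matrix p ** A ** transpose (perm_matrix p))
     = (\<Sum>i\<in>UNIV. \<Sum>j\<in>UNIV. A$(p i)$(p j) * A$(p i)$(p j))"
    by (simp add: inner_mat pm_conj)
  also have "\<dots> = (\<Sum>i\<in>UNIV. \<Sum>j\<in>UNIV. A$(p i)$j * A$(p i)$j)"
  proof (rule sum.cong)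
    fix i show "(\<Sum>j\<in>UNIV. A$(p i)$(p j) * A$(p i)$(p j)) = (\<Sum>j\<in>UNIV. A$(p i)$j * A$(p i)$j)"
      by (rule sum.reindex_bij_betw[OF b])
  qed simp
  also have "\<dots> = (\<Sum>i\<in>UNIV. \<Sum>j\<in>UNIV. A$i$j * A$i$j)"
    by (rule sum.reindex_bij_betw[OF b])
  finally show ?thesis by (simp add: inner_mat)
qed

lemma pm_finite: "finite (perm_matrices :: (real^'n::finite^'n) set)"
proof -
  have "(perm_matrices :: (real^'n^'n) set) = perm_matrix ` {p. p permutes (UNIV::'n set)}"
    unfolding perm_matrices_def by auto
  moreover have "finite {p. p permutes (UNIV::'n set)}" by (rule finite_permutations) simp
  ultimately show ?thesis by (metis finite_imageI)
qed

lemma pm_id: "(mat 1 :: real^'n::finite^'n) \<in> perm_matrices"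
proof -
  have "perm_matrix id = (mat 1 :: real^'n^'n)"
    by (simp add: perm_matrix_def mat_def vec_eq_iff)
  moreover have "id permutes (UNIV::'n set)" by simp
  ultimately have "\<exists>p. mat 1 = perm_matrix p \<and> p permutes (UNIV::'n set)" by metis
  thus ?thesis unfolding perm_matrices_def by simp
qed

lemma key:
  fixes A1 A2 :: "real^'n^'n"
  assumes s1: "symmetric_matrix A1" and eq: "Theta A1 A1 = Theta A1 A2"
  shows "\<exists>p. p permutes (UNIV::'n set) \<and>
     norm (A1 - perm_matrix p ** A2 ** transpose (perm_matrix p))^2 \<le> A2 \<bullet> A2 - A1 \<bullet> A1"
proof -
  let ?f = "\<lambda>B. \<lambda>Q. trace (A1 ** Q ** B ** transpose Q)"
  have ne: "perm_matrices \<noteq> {}" using pm_id by blast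
  have "Theta A1 A2 \<in> ?f A2 ` perm_matrices"
    unfolding Theta_def using pm_finite ne by (intro Max_in) auto
  then obtain Q where Q: "Q \<in> perm_matrices" and tq: "Theta A1 A2 = ?f A2 Q" by auto
  obtain p where p: "p permutes (UNIV::'n set)" and Qp: "Q = perm_matrix p"
    using Q unfolding perm_matrices_def by auto
  have "?f A1 (mat 1) \<le> Theta A1 A1"
    unfolding Theta_def
  proof (rule Max_ge)
    show "finite (?f A1 ` perm_matrices)" using pm_finite by (rule finite_imageI)
    show "?f A1 (mat 1) \<in> ?f A1 ` perm_matrices" using pm_id by (rule imageI)
  qed
  hence "A1 \<bullet> A1 \<le> Theta A1 A1"
    using trace_sym[OF s1, of A1] by (simp add: matrix_mul_rid matrix_mul_lid transpose_mat)
  moreover have "Theta A1 A2 = A1 \<bullet> (Q ** A2 ** transpose Q)"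
    using tq trace_sym[OF s1, of "Q ** A2 ** transpose Q"] by (simp add: matrix_mul_assoc)
  ultimately have ge: "A1 \<bullet> A1 \<le> A1 \<bullet> (Q ** A2 ** transpose Q)" using eq by simp
  let ?B = "Q ** A2 ** transpose Q"
  have "norm (A1 - ?B)^2 = (A1 - ?B) \<bullet> (A1 - ?B)" by (simp add: power2_norm_eq_inner)
  also have "\<dots> = A1 \<bullet> A1 - 2 * (A1 \<bullet> ?B) + ?B \<bullet> ?B"
    by (simp add: inner_diff_left inner_diff_right inner_commute)
  also have "?B \<bullet> ?B = A2 \<bullet> A2" using conj_norm[OF p] Qp by simp
  finally have "norm (A1 - ?B)^2 \<le> A2 \<bullet> A2 - A1 \<bullet> A1" using ge by simp
  hence "norm (A1 - perm_matrix p ** A2 ** transpose (perm_matrix p))^2 \<le> A2 \<bullet> A2 - A1 \<bullet> A1"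
    using Qp by simp
  with p show ?thesis by (intro exI[of _ p] conjI)
qed

theorem lemma1:
  fixes A1 A2 :: "real^'n^'n"
  assumes "symmetric_matrix A1" and "symmetric_matrix A2"
    and "\<not> (\<exists>Q\<in>perm_matrices. A1 = Q ** A2 ** transpose Q)"
  shows "\<exists>P. symmetric_matrix P \<and> Theta P A1 \<noteq> Theta P A2"
proof (rule ccontr)
  assume H: "\<not> (\<exists>P. symmetric_matrix P \<and> Theta P A1 \<noteq> Theta P A2)"
  have e1: "Theta A1 A1 = Theta A1 A2" using H assms(1) by auto
  have e2: "Theta A2 A2 = Theta A2 A1" using H assms(2) by auto
  obtain p where p: "p permutes (UNIV::'n set)" and
    n1: "norm (A1 - perm_matrix p ** A2 ** transpose (perm_matrix p))^2 \<le> A2 \<bullet> A2 - A1 \<bullet> A1"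
    using key[OF assms(1) e1] by blast
  obtain q where n2: "norm (A2 - perm_matrix q ** A1 ** transpose (perm_matrix q))^2 \<le> A1 \<bullet> A1 - A2 \<bullet> A2"
    using key[OF assms(2) e2] by blast
  have "norm (A1 - perm_matrix p ** A2 ** transpose (perm_matrix p))^2 \<le> 0"
  proof -
    have "0 \<le> norm (A2 - perm_matrix q ** A1 ** transpose (perm_matrix q))^2" by simp
    thus ?thesis using n1 n2 by linarith
  qed
  hence "A1 = perm_matrix p ** A2 ** transpose (perm_matrix p)" by simp
  moreover have "perm_matrix p \<in> perm_matrices"
    unfolding perm_matrices_def using p by (intro CollectI exI[of _ p] conjI refl)
  ultimately have "\<exists>Q\<in>perm_matrices. A1 = Q ** A2 ** transpose Q" by (intro bexI)
  with assms(3) show False by (rule notE)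
qed

end
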